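(* Let $t\ge 2$ be an even integer and let $p\ge 3$ be a prime with $(t-1)\mid(p-1)$; write $p-1=a(t-1)$ (so $a$ is even). Let $g$ be a primitive root of $\mathbb{F}_p$ (a generator of $\mathbb{F}_p^*$), and set $B=\{g,g^2,\dots,g^{a/2}\}\subseteq\mathbb{F}_p^*$ and $W=\{a,2a,\dots,(t-1)a\}\subseteq\mathbb{Z}$. For $f\in\mathbb{F}_p^*$ define $$P_f=\{(w,b)\in W\times B : g^w b=f\},\qquad N_f=\{(w,b)\in W\times B : g^w b=-f\}.$$ Then for every $f\in\mathbb{F}_p^*$ we have $\{|P_f|,|N_f|\}=\{0,1\}$; in particular each of $P_f$ and $N_f$ has at most one element.
   Context: $\mathbb{F}_p$ is the field with $p$ elements and $\mathbb{F}_p^*$ its multiplicative group. *)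

theory Defs
  imports "HOL-Number_Theory.Number_Theory"
begin

(* Elements of F_p are represented by their canonical residues in {0..<p};
   F_p^* is {1..<p}. *)

definition Bset :: "nat \<Rightarrow> nat \<Rightarrow> nat \<Rightarrow> nat set" where
  "Bset p g a = {g ^ i mod p | i. i \<in> {1..a div 2}}"

definition Wset :: "nat \<Rightarrow> nat \<Rightarrow> nat set" where
  "Wset t a = {k * a | k. k \<in> {1..t - 1}}"

definition Pset :: "nat \<Rightarrow> nat \<Rightarrow> nat \<Rightarrow> nat \<Rightarrow> nat \<Rightarrow> (nat \<times> nat) set" where
  "Pset p g t a f = {(w, b). w \<in> Wset t a \<and> b \<in> Bset p g a \<and> (g ^ w * b) mod p = f mod p}"

definition Nset :: "nat \<Rightarrow> nat \<Rightarrow> nat \<Rightarrow> nat \<Rightarrow> nat \<Rightarrow> (nat \<times> nat) set" where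
  "Nset p g t a f = {(w, b). w \<in> Wset t a \<and> b \<in> Bset p g a \<and> (g ^ w * b) mod p = (p - f mod p) mod p}"

end

theory Submission
  imports Defs
begin

lemma key_cong:
  assumes "prime p" "residue_primroot p g"
  shows "(g ^ w * (g ^ i mod p)) mod p = g ^ x mod p \<longleftrightarrow> [w + i = x] (mod (p - 1))"
proof -
  have "(g ^ w * (g ^ i mod p)) mod p = g ^ (w + i) mod p"
    by (simp add: mod_mult_right_eq power_add)
  moreover have "ord p g = p - 1" using assms
    by (simp add: residue_primroot_def totient_prime)
  moreover have "coprime p g" using assms by (simp add: residue_primroot_def)
  ultimately show ?thesis using order_divides_expdiff[of p g "w+i" x]
    by (simp add: cong_def)
qed

lemma count_lemma:
  assumes p: "prime p" and g: "residue_primroot p g"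
    and m: "p - 1 = a * (t - 1)" and a: "a = 2 * c" "c > 0" and t: "t \<ge> 2"
  shows "card {(w, b). w \<in> Wset t a \<and> b \<in> Bset p g a \<and> (g ^ w * b) mod p = g ^ x mod p}
     = (if x mod a \<in> {1..c} then 1 else 0)"
proof -
  let ?S = "{(w, b). w \<in> Wset t a \<and> b \<in> Bset p g a \<and> (g ^ w * b) mod p = g ^ x mod p}"
  have ad: "a div 2 = c" using a by simp
  have mem: "\<exists>k i. w = k * a \<and> b = g ^ i mod p \<and> k \<in> {1..t-1} \<and> i \<in> {1..c}
      \<and> [k * a + i = x] (mod (a * (t - 1)))" if "(w, b) \<in> ?S" for w b
  proof -
    from that obtain k i where ki: "w = k * a" "b = g ^ i mod p" "k \<in> {1..t-1}" "i \<in> {1..c}"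
      "(g ^ w * b) mod p = g ^ x mod p"
      unfolding Wset_def Bset_def ad by auto
    with key_cong[OF p g] m show ?thesis by auto
  qed
  have imod: "i = x mod a" if "i \<in> {1..c}" "[k * a + i = x] (mod (a * (t - 1)))" for k i
  proof -
    have "[k * a + i = x] (mod a)" using that(2) by (metis cong_dvd_modulus_nat dvd_triv_left)
    then have "(k * a + i) mod a = x mod a" by (simp add: cong_def)
    moreover have "(k * a + i) mod a = i" using that(1) a by simp
    ultimately show ?thesis by simp
  qed
  show ?thesis
  proof (cases "x mod a \<in> {1..c}")
    case False
    have "?S = {}"
    proof (rule ccontr)
      assume "?S \<noteq> {}"
      then obtain w b where "(w, b) \<in> ?S" by auto
      from mem[OF this] obtain k i where "i \<in> {1..c}" "[k * a + i = x] (mod (a * (t - 1)))" by blast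
      with imod False show False by metis
    qed
    then show ?thesis by (subst if_not_P[OF False]) (simp only: card.empty)
  next
    case True
    define r where "r = x mod a"
    define q where "q = (x div a) mod (t - 1)"
    define k0 where "k0 = (if q = 0 then t - 1 else q)"
    have k0r: "k0 \<in> {1..t-1}" using t unfolding k0_def q_def by auto
    have k0q: "k0 mod (t - 1) = q" using t unfolding k0_def q_def by auto
    have kchar: "[k * a + r = x] (mod (a * (t - 1))) \<longleftrightarrow> k mod (t - 1) = q" for k
    proof -
      have xe: "x = (x div a) * a + r" unfolding r_def by simp
      have "[k * a + r = x] (mod (a * (t - 1))) \<longleftrightarrow> [k * a = (x div a) * a] (mod (a * (t - 1)))"
        by (subst xe) (simp add: cong_add_rcancel_nat)
      also have "\<dots> \<longleftrightarrow> (a * k) mod (a * (t - 1)) = (a * (x div a)) mod (a * (t - 1))"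
        by (simp add: cong_def mult.commute)
      also have "\<dots> \<longleftrightarrow> k mod (t - 1) = q"
        using a unfolding q_def by (simp add: mod_mult_mult1)
      finally show ?thesis .
    qed
    have "?S = {(k0 * a, g ^ r mod p)}"
    proof
      show "?S \<subseteq> {(k0 * a, g ^ r mod p)}"
      proof (rule subsetI)
        fix z assume "z \<in> ?S"
        then obtain w b where z: "z = (w, b)" "(w, b) \<in> ?S" by auto
        from mem[OF z(2)] obtain k i where ki: "w = k * a" "b = g ^ i mod p" "k \<in> {1..t-1}"
          "i \<in> {1..c}" "[k * a + i = x] (mod (a * (t - 1)))" by blast
        have "i = r" using imod ki(4,5) r_def by blast
        then have "k mod (t - 1) = q" using kchar ki(5) by simp
        then have "k = k0" using ki(3) k0r k0q t
          by (metis atLeastAtMost_iff le_neq_implies_less mod_less mod_self not_one_le_zero k0_def)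
        then show "z \<in> {(k0 * a, g ^ r mod p)}" using ki z \<open>i = r\<close> by simp
      qed
    next
      have "k0 * a \<in> Wset t a" using k0r unfolding Wset_def by auto
      moreover have "g ^ r mod p \<in> Bset p g a" using True unfolding Bset_def ad r_def by auto
      moreover have "(g ^ (k0 * a) * (g ^ r mod p)) mod p = g ^ x mod p"
        using key_cong[OF p g] m kchar k0q by simp
      ultimately show "{(k0 * a, g ^ r mod p)} \<subseteq> ?S" by simp
    qed
    then show ?thesis by (subst if_P[OF True]) simp
  qed
qed


lemma half_power:
  assumes p: "prime p" "p \<ge> 3" and g: "residue_primroot p g"
  shows "g ^ ((p - 1) div 2) mod p = p - 1"
proof -
  define h where "h = g ^ ((p - 1) div 2)"
  have ord: "ord p g = p - 1" using assms by (simp add: residue_primroot_def totient_prime)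
  have cop: "coprime p g" using assms by (simp add: residue_primroot_def)
  have "g > 0" using cop p by (cases "g = 0") auto
  then have hpos: "h > 0" unfolding h_def by simp
  have ev: "even (p - 1)" using p prime_odd_nat by auto
  have "h * h = g ^ (p - 1)" unfolding h_def using ev
    by (metis ev dvd_mult_div_cancel mult_2 power_add)
  then have "[h * h = 1] (mod p)" using ord ord_works[of g p] by simp
  then have "[int h * int h = 1] (mod int p)"
    by (metis cong_int_iff of_nat_1 of_nat_mult)
  then have "[int h = 1] (mod int p) \<or> [int h = - 1] (mod int p)"
    using cong_square[of "int p" "int h"] p hpos by simp
  moreover have "\<not> [h = 1] (mod p)"
  proof
    assume "[h = 1] (mod p)"
    then have "p - 1 dvd (p - 1) div 2" using ord ord_divides[of g "(p-1) div 2" p] h_def by simp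
    moreover have "0 < (p - 1) div 2" "(p - 1) div 2 < p - 1" using p by auto
    ultimately show False by (simp add: nat_dvd_not_less)
  qed
  ultimately have "[int h = - 1] (mod int p)" by (metis cong_int_iff of_nat_1)
  then have "[int h = int (p - 1)] (mod int p)"
    using p by (simp add: cong_def of_nat_diff mod_diff_left_eq[symmetric])
  then have "[h = p - 1] (mod p)" using cong_int_iff by blast
  then show ?thesis using p unfolding h_def cong_def by simp
qed

theorem lemma1:
  fixes t p a g f :: nat
  assumes "even t" and "t \<ge> 2"
    and "prime p" and "p \<ge> 3"
    and "p - 1 = a * (t - 1)"
    and "residue_primroot p g"
    and "f \<in> {1..<p}"
  shows "{card (Pset p g t a f), card (Nset p g t a f)} = {0, 1}"
proof -
  note p = assms(3) and g = assms(6)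
  have "odd p" using assms prime_odd_nat by auto
  have "odd (t - 1)" using assms by auto
  have "even a" using \<open>odd p\<close> \<open>odd (t - 1)\<close> assms(5) assms(4)
    by (metis even_add even_diff_nat even_mult_iff odd_one)
  have "a * (t - 1) \<ge> 2" using assms(4,5) by linarith
  then have "a > 0" by (cases "a = 0") auto
  define c where "c = a div 2"
  have ac: "a = 2 * c" "c > 0" using \<open>even a\<close> \<open>a > 0\<close> c_def by auto
  have "f \<in> totatives p" using assms(7) p by (simp add: totatives_prime)
  moreover have "(\<lambda>i. g ^ i mod p) ` {..<totient p} = totatives p"
    using residue_primroot_is_generator[OF prime_gt_1_nat[OF p] g] by (simp add: bij_betw_def)
  ultimately have "f \<in> (\<lambda>i. g ^ i mod p) ` {..<totient p}" by simp
  then obtain e where e: "f = g ^ e mod p" by blast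
  have fm: "f mod p = g ^ e mod p" using e by simp
  define d where "d = c * (t - 1)"
  have dd: "(p - 1) div 2 = d" using assms(5) ac d_def by simp
  have nf: "(p - f mod p) mod p = g ^ (e + d) mod p"
  proof -
    have h: "g ^ d mod p = p - 1" using half_power[OF p assms(4) g] dd by simp
    have "g ^ (e + d) mod p = (f * (p - 1)) mod p"
      by (metis e h mod_mult_eq power_add mod_mod_trivial)
    also have "\<dots> = (p - f) mod p"
    proof -
      have a: "1 \<le> f" "f < p" using assms(7) by auto
      have "int (f * (p - 1)) = int ((f - 1) * p + (p - f))" using a by (simp add: of_nat_diff algebra_simps)
      then have "f * (p - 1) = (f - 1) * p + (p - f)" by linarith
      then show ?thesis by simp
    qed
    finally show ?thesis using assms(7) by simp
  qed
  have P: "Pset p g t a f = {(w, b). w \<in> Wset t a \<and> b \<in> Bset p g a \<and> (g ^ w * b) mod p = g ^ e mod p}"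
    unfolding Pset_def fm ..
  have N: "Nset p g t a f = {(w, b). w \<in> Wset t a \<and> b \<in> Bset p g a \<and> (g ^ w * b) mod p = g ^ (e + d) mod p}"
    unfolding Nset_def nf ..
  have cP: "card (Pset p g t a f) = (if e mod a \<in> {1..c} then 1 else 0)"
    unfolding P by (rule count_lemma[OF p g assms(5) ac assms(2)])
  have cN: "card (Nset p g t a f) = (if (e + d) mod a \<in> {1..c} then 1 else 0)"
    unfolding N by (rule count_lemma[OF p g assms(5) ac assms(2)])
  have "(e + d) mod a = (e + c) mod a"
  proof -
    obtain s where "t - 1 = 2 * s + 1" using \<open>odd (t - 1)\<close> oddE by blast
    then have "e + d = (e + c) + s * a" unfolding d_def using ac by (simp add: algebra_simps)
    then show ?thesis by (metis mod_mult_self1)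
  qed
  moreover have "(e mod a \<in> {1..c}) \<longleftrightarrow> \<not> ((e + c) mod a \<in> {1..c})"
  proof -
    have r: "(e + c) mod a = (e mod a + c) mod a" by (simp add: mod_add_left_eq)
    define r where "r = e mod a"
    have "r < 2 * c" using ac r_def by simp
    have "(r \<in> {1..c}) \<longleftrightarrow> \<not> ((r + c) mod (2 * c) \<in> {1..c})"
    proof (cases "r + c < 2 * c")
      case True
      then have "(r + c) mod (2 * c) = r + c" by simp
      then show ?thesis using True ac by auto
    next
      case False
      then have "(r + c) mod (2 * c) = r - c" using \<open>r < 2 * c\<close>
        by (simp add: le_mod_geq)
      then show ?thesis using False ac \<open>r < 2 * c\<close> by auto
    qed
    then show ?thesis unfolding r r_def using ac by simp
  qed
  ultimately show ?thesis using cP cN by auto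
qed

end
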